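(* Let $|\text{-}|:\mathcal E\to\mathcal B$ be a concrete category over $\mathcal B$ with $\mathcal E$ non-empty, such that the $\mathcal Q_{\mathcal B}$-category $\overline{\mathcal E}$ is tensored. Then $|\text{-}|$ has a fully faithful left adjoint $L:\mathcal B\to\mathcal E$ which is a right inverse of $|\text{-}|$ (i.e. $|LT|=T$ and the unit is the identity).
   Context: $\mathcal B$ is a category with small hom-sets; a concrete category over $\mathcal B$ is a category with a faithful functor $|\text{-}|:\mathcal E\to\mathcal B$; a map $f:|X|\to|Y|$ is an $\mathcal E$-morphism if it is $|f'|$ for some $f':X\to Y$. For subsets $\mathbf f\subseteq\mathcal B(S,T)$, $\mathbf h\subseteq\mathcal B(S,U)$, put $\mathbf h\swarrow\mathbf f=\{g\in\mathcal B(T,U)\mid\forall f\in\mathbf f: g\circ f\in\mathbf h\}$. $\overline{\mathcal E}(X,Y)$ denotes the set of $\mathcal E$-morphisms $|X|\to|Y|$. $\overline{\mathcal E}$ is tensored if for all $X\in\mathrm{ob}\,\mathcal E$, $T\in\mathrm{ob}\,\mathcal B$ and all subsets $\mathbf u\subseteq\mathcal B(|X|,T)$ (including $\mathbf u=\varnothing$) there is $Y\in\mathrm{ob}\,\mathcal E$ with $|Y|=T$ and $\overline{\mathcal E}(Y,Z)=\overline{\mathcal E}(X,Z)\swarrow\mathbf u$ for all $Z\in\mathrm{ob}\,\mathcal E$. *)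

theory Defs
  imports Main
begin

text \<open>Categories with small hom-sets: objects, hom-sets (as HOL sets), composition
  (comp g f = g after f) and identities.\<close>

record ('o, 'm) cat =
  Ob :: "'o set"
  Hom :: "'o \<Rightarrow> 'o \<Rightarrow> 'm set"
  comp :: "'m \<Rightarrow> 'm \<Rightarrow> 'm"
  ident :: "'o \<Rightarrow> 'm"

definition is_category :: "('o, 'm) cat \<Rightarrow> bool" where
  "is_category C \<longleftrightarrow>
     (\<forall>X Y. (X \<notin> Ob C \<or> Y \<notin> Ob C) \<longrightarrow> Hom C X Y = {}) \<and>
     (\<forall>X Y X' Y'. Hom C X Y \<inter> Hom C X' Y' \<noteq> {} \<longrightarrow> X = X' \<and> Y = Y') \<and>
     (\<forall>X\<in>Ob C. ident C X \<in> Hom C X X) \<and>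
     (\<forall>X Y Z f g. f \<in> Hom C X Y \<longrightarrow> g \<in> Hom C Y Z \<longrightarrow> comp C g f \<in> Hom C X Z) \<and>
     (\<forall>X Y Z W f g h. f \<in> Hom C X Y \<longrightarrow> g \<in> Hom C Y Z \<longrightarrow> h \<in> Hom C Z W \<longrightarrow>
        comp C h (comp C g f) = comp C (comp C h g) f) \<and>
     (\<forall>X Y f. f \<in> Hom C X Y \<longrightarrow> comp C (ident C Y) f = f \<and> comp C f (ident C X) = f)"

definition is_functor ::
  "('o1, 'm1) cat \<Rightarrow> ('o2, 'm2) cat \<Rightarrow> ('o1 \<Rightarrow> 'o2) \<Rightarrow> ('m1 \<Rightarrow> 'm2) \<Rightarrow> bool" where
  "is_functor C D Fo Fm \<longleftrightarrow>
     (\<forall>X\<in>Ob C. Fo X \<in> Ob D) \<and>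
     (\<forall>X Y f. f \<in> Hom C X Y \<longrightarrow> Fm f \<in> Hom D (Fo X) (Fo Y)) \<and>
     (\<forall>X\<in>Ob C. Fm (ident C X) = ident D (Fo X)) \<and>
     (\<forall>X Y Z f g. f \<in> Hom C X Y \<longrightarrow> g \<in> Hom C Y Z \<longrightarrow> Fm (comp C g f) = comp D (Fm g) (Fm f))"

definition faithful ::
  "('o1, 'm1) cat \<Rightarrow> ('m1 \<Rightarrow> 'm2) \<Rightarrow> bool" where
  "faithful C Fm \<longleftrightarrow> (\<forall>X Y. inj_on Fm (Hom C X Y))"

definition fully_faithful ::
  "('o1, 'm1) cat \<Rightarrow> ('o2, 'm2) cat \<Rightarrow> ('o1 \<Rightarrow> 'o2) \<Rightarrow> ('m1 \<Rightarrow> 'm2) \<Rightarrow> bool" where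
  "fully_faithful C D Fo Fm \<longleftrightarrow>
     (\<forall>X\<in>Ob C. \<forall>Y\<in>Ob C. bij_betw Fm (Hom C X Y) (Hom D (Fo X) (Fo Y)))"

definition concrete_category ::
  "('eo, 'em) cat \<Rightarrow> ('bo, 'bm) cat \<Rightarrow> ('eo \<Rightarrow> 'bo) \<Rightarrow> ('em \<Rightarrow> 'bm) \<Rightarrow> bool" where
  "concrete_category E B Uo Um \<longleftrightarrow>
     is_category E \<and> is_category B \<and> is_functor E B Uo Um \<and> faithful E Um"

definition Ebar :: "('eo, 'em) cat \<Rightarrow> ('em \<Rightarrow> 'bm) \<Rightarrow> 'eo \<Rightarrow> 'eo \<Rightarrow> 'bm set" where
  "Ebar E Um X Y = Um ` Hom E X Y"

definition lift_set :: "('bo, 'bm) cat \<Rightarrow> 'bo \<Rightarrow> 'bo \<Rightarrow> 'bm set \<Rightarrow> 'bm set \<Rightarrow> 'bm set" where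
  "lift_set B T U h f = {g \<in> Hom B T U. \<forall>f0\<in>f. comp B g f0 \<in> h}"

definition tensored ::
  "('eo, 'em) cat \<Rightarrow> ('bo, 'bm) cat \<Rightarrow> ('eo \<Rightarrow> 'bo) \<Rightarrow> ('em \<Rightarrow> 'bm) \<Rightarrow> bool" where
  "tensored E B Uo Um \<longleftrightarrow>
     (\<forall>X\<in>Ob E. \<forall>T\<in>Ob B. \<forall>u. u \<subseteq> Hom B (Uo X) T \<longrightarrow>
        (\<exists>Y\<in>Ob E. Uo Y = T \<and>
           (\<forall>Z\<in>Ob E. Ebar E Um Y Z = lift_set B T (Uo Z) (Ebar E Um X Z) u)))"

text \<open>(Lo, Lm) : B \<rightarrow> E is left adjoint to (Uo, Um) with unit \<eta> (\<eta> T \<in> B(T, |L T|)),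
  in the universal-arrow formulation: for every f : T \<rightarrow> |X| there is a unique
  E-morphism f' : L T \<rightarrow> X with |f'| \<circ> \<eta>_T = f; and \<eta> is natural.\<close>

definition left_adjoint_with_unit ::
  "('eo, 'em) cat \<Rightarrow> ('bo, 'bm) cat \<Rightarrow> ('eo \<Rightarrow> 'bo) \<Rightarrow> ('em \<Rightarrow> 'bm)
   \<Rightarrow> ('bo \<Rightarrow> 'eo) \<Rightarrow> ('bm \<Rightarrow> 'em) \<Rightarrow> ('bo \<Rightarrow> 'bm) \<Rightarrow> bool" where
  "left_adjoint_with_unit E B Uo Um Lo Lm \<eta> \<longleftrightarrow>
     is_functor B E Lo Lm \<and>
     (\<forall>T\<in>Ob B. \<eta> T \<in> Hom B T (Uo (Lo T))) \<and>
     (\<forall>T S g. g \<in> Hom B T S \<longrightarrow> comp B (Um (Lm g)) (\<eta> T) = comp B (\<eta> S) g) \<and>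
     (\<forall>T\<in>Ob B. \<forall>X\<in>Ob E. \<forall>f\<in>Hom B T (Uo X).
        \<exists>!f'. f' \<in> Hom E (Lo T) X \<and> comp B (Um f') (\<eta> T) = f)"

end

theory Submission
  imports Defs
begin

theorem corollary4p4:
  fixes E :: "('eo, 'em) cat" and B :: "('bo, 'bm) cat"
    and Uo :: "'eo \<Rightarrow> 'bo" and Um :: "'em \<Rightarrow> 'bm"
  assumes "concrete_category E B Uo Um"
    and "Ob E \<noteq> {}"
    and "tensored E B Uo Um"
  shows "\<exists>Lo Lm. left_adjoint_with_unit E B Uo Um Lo Lm (ident B)
            \<and> fully_faithful B E Lo Lm
            \<and> (\<forall>T\<in>Ob B. Uo (Lo T) = T)
            \<and> (\<forall>T S g. g \<in> Hom B T S \<longrightarrow> Um (Lm g) = g)"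
proof -
  have cE: "is_category E" and cB: "is_category B" and fU: "is_functor E B Uo Um"
    and fa: "\<And>X Y. inj_on Um (Hom E X Y)"
    using assms(1) unfolding concrete_category_def faithful_def by auto
  obtain X0 where X0: "X0 \<in> Ob E" using assms(2) by auto
  define P where "P T Y \<longleftrightarrow> Y \<in> Ob E \<and> Uo Y = T \<and>
      (\<forall>Z\<in>Ob E. Um ` Hom E Y Z = Hom B T (Uo Z))" for T Y
  have exP: "\<exists>Y. P T Y" if T: "T \<in> Ob B" for T
  proof -
    from assms(3) X0 T obtain Y where "Y \<in> Ob E" "Uo Y = T"
      "\<forall>Z\<in>Ob E. Ebar E Um Y Z = lift_set B T (Uo Z) (Ebar E Um X0 Z) {}"
      unfolding tensored_def by (metis empty_subsetI)
    then show ?thesis unfolding P_def Ebar_def lift_set_def by auto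
  qed
  define Lo where "Lo T = (SOME Y. P T Y)" for T
  have PL: "P T (Lo T)" if "T \<in> Ob B" for T
    using exP[OF that] unfolding Lo_def by (rule someI_ex)
  have homOb: "T \<in> Ob B \<and> S \<in> Ob B" if "g \<in> Hom B T S" for g T S
    using cB that unfolding is_category_def by (metis empty_iff)
  have disj: "T = T' \<and> S = S'" if "g \<in> Hom B T S" "g \<in> Hom B T' S'" for g T S T' S'
    using cB that unfolding is_category_def by (metis IntI empty_iff)
  have fUh: "Um f \<in> Hom B (Uo X) (Uo Y)" if "f \<in> Hom E X Y" for f X Y
    using fU that unfolding is_functor_def by blast
  have EhomOb: "X \<in> Ob E \<and> Y \<in> Ob E" if "f \<in> Hom E X Y" for f X Y
    using cE that unfolding is_category_def by (metis empty_iff)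
  have exLm: "\<exists>f'. f' \<in> Hom E (Lo T) (Lo S) \<and> Um f' = g" if g: "g \<in> Hom B T S" for g T S
  proof -
    have T: "T \<in> Ob B" and S: "S \<in> Ob B" using homOb[OF g] by auto
    have "g \<in> Hom B T (Uo (Lo S))" using PL[OF S] g unfolding P_def by simp
    then show ?thesis using PL[OF T] PL[OF S] unfolding P_def by (metis imageE)
  qed
  define Lm where "Lm g = (SOME f'. \<exists>T S. g \<in> Hom B T S \<and> f' \<in> Hom E (Lo T) (Lo S) \<and> Um f' = g)" for g
  have Lm: "Lm g \<in> Hom E (Lo T) (Lo S) \<and> Um (Lm g) = g" if g: "g \<in> Hom B T S" for g T S
  proof -
    have "\<exists>f'. \<exists>T S. g \<in> Hom B T S \<and> f' \<in> Hom E (Lo T) (Lo S) \<and> Um f' = g"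
      using exLm[OF g] g by blast
    then have "\<exists>T S. g \<in> Hom B T S \<and> Lm g \<in> Hom E (Lo T) (Lo S) \<and> Um (Lm g) = g"
      unfolding Lm_def by (rule someI_ex)
    then show ?thesis using disj[OF g] by blast
  qed
  have uniq: "f1 = f2" if "f1 \<in> Hom E X Y" "f2 \<in> Hom E X Y" "Um f1 = Um f2" for f1 f2 X Y
    using fa[of X Y] that by (meson inj_onD)
  have UoL: "Uo (Lo T) = T" if "T \<in> Ob B" for T using PL[OF that] unfolding P_def by simp
  have LoOb: "Lo T \<in> Ob E" if "T \<in> Ob B" for T using PL[OF that] unfolding P_def by simp
  have idB: "ident B T \<in> Hom B T T" if "T \<in> Ob B" for T using cB that unfolding is_category_def by blast
  have idE: "ident E X \<in> Hom E X X" if "X \<in> Ob E" for X using cE that unfolding is_category_def by blast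
  have Uid: "Um (ident E X) = ident B (Uo X)" if "X \<in> Ob E" for X using fU that unfolding is_functor_def by blast
  have compE: "comp E g f \<in> Hom E X Z" if "f \<in> Hom E X Y" "g \<in> Hom E Y Z" for f g X Y Z
    using cE that unfolding is_category_def by blast
  have Ucomp: "Um (comp E g f) = comp B (Um g) (Um f)" if "f \<in> Hom E X Y" "g \<in> Hom E Y Z" for f g X Y Z
    using fU that unfolding is_functor_def by blast
  have idl: "comp B f (ident B X) = f" "comp B (ident B Y) f = f" if "f \<in> Hom B X Y" for f X Y
    using cB that unfolding is_category_def by blast+
  have func: "is_functor B E Lo Lm"
    unfolding is_functor_def
  proof (intro conjI allI ballI impI)
    fix X assume X: "X \<in> Ob B"
    show "Lo X \<in> Ob E" using LoOb[OF X] .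
    show "Lm (ident B X) = ident E (Lo X)"
      using Lm[OF idB[OF X]] idE[OF LoOb[OF X]] Uid[OF LoOb[OF X]] UoL[OF X] uniq by metis
  next
    fix X Y f assume "f \<in> Hom B X Y" then show "Lm f \<in> Hom E (Lo X) (Lo Y)" using Lm by blast
  next
    fix X Y Z f g assume f: "f \<in> Hom B X Y" and g: "g \<in> Hom B Y Z"
    have gf: "comp B g f \<in> Hom B X Z" using cB f g unfolding is_category_def by blast
    show "Lm (comp B g f) = comp E (Lm g) (Lm f)"
      using Lm[OF gf] Lm[OF f] Lm[OF g] compE Ucomp uniq by metis
  qed
  have adj: "left_adjoint_with_unit E B Uo Um Lo Lm (ident B)"
    unfolding left_adjoint_with_unit_def
  proof (intro conjI func ballI allI impI)
    fix T assume "T \<in> Ob B" then show "ident B T \<in> Hom B T (Uo (Lo T))" using idB UoL by simp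
  next
    fix T S g assume g: "g \<in> Hom B T S"
    show "comp B (Um (Lm g)) (ident B T) = comp B (ident B S) g"
      using Lm[OF g] idl[OF g] by simp
  next
    fix T X f assume T: "T \<in> Ob B" and X: "X \<in> Ob E" and f: "f \<in> Hom B T (Uo X)"
    obtain f' where f': "f' \<in> Hom E (Lo T) X" "Um f' = f"
      using PL[OF T] X f unfolding P_def by (metis imageE)
    show "\<exists>!f'. f' \<in> Hom E (Lo T) X \<and> comp B (Um f') (ident B T) = f"
    proof (rule ex1I[of _ f'])
      show "f' \<in> Hom E (Lo T) X \<and> comp B (Um f') (ident B T) = f" using f' idl f by simp
    next
      fix h assume h: "h \<in> Hom E (Lo T) X \<and> comp B (Um h) (ident B T) = f"
      have "Um h \<in> Hom B T (Uo X)" using fUh h UoL[OF T] by metis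
      then have "Um h = f" using h idl by metis
      then show "h = f'" using h f' uniq by metis
    qed
  qed
  have ff: "fully_faithful B E Lo Lm"
    unfolding fully_faithful_def
  proof (intro ballI)
    fix X Y assume X: "X \<in> Ob B" and Y: "Y \<in> Ob B"
    show "bij_betw Lm (Hom B X Y) (Hom E (Lo X) (Lo Y))"
      unfolding bij_betw_def
    proof (intro conjI)
      show "inj_on Lm (Hom B X Y)" by (rule inj_onI) (metis Lm)
      show "Lm ` Hom B X Y = Hom E (Lo X) (Lo Y)"
      proof
        show "Lm ` Hom B X Y \<subseteq> Hom E (Lo X) (Lo Y)" using Lm by blast
      next
        show "Hom E (Lo X) (Lo Y) \<subseteq> Lm ` Hom B X Y"
        proof
          fix h assume h: "h \<in> Hom E (Lo X) (Lo Y)"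
          have u: "Um h \<in> Hom B X Y" using fUh[OF h] UoL X Y by simp
          have "Lm (Um h) = h" using Lm[OF u] h uniq by metis
          then show "h \<in> Lm ` Hom B X Y" using u by force
        qed
      qed
    qed
  qed
  show ?thesis
    apply (rule exI[of _ Lo], rule exI[of _ Lm])
    using adj ff UoL Lm by blast
qed

end
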